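(* Consider the joint regression model described in the context, and let Assumptions (A1)–(A5) hold. Suppose that $(T_1,C_1)$ satisfies the model with parameter vector $(\gamma,\theta)$ and $(T_2,C_2)$ satisfies the model with parameter vector $(\gamma^*,\theta^* )$ (with the same observed covariates $(W,Z)$), and let $Y_j=\min\{T_j,C_j\}$, $\Delta_j=\mathbb{1}(T_j\le C_j)$, $j=1,2$. If $$f_{Y_1,\Delta_1\mid W,Z}(\cdot,k\mid w,z,\gamma;\theta)\equiv f_{Y_2,\Delta_2\mid W,Z}(\cdot,k\mid w,z,\gamma^*;\theta^* )$$ for $k\in\{0,1\}$ and almost every $(w,z)$, then $\gamma=\gamma^*$ and $\theta=\theta^*$.
   Context: Let $m\ge 0$ be an integer. Observed covariates are $\tilde X\in\mathbb{R}^m$, a scalar $Z$ and a scalar instrument $\tilde W$; put $X=(1,\tilde X^\top)^\top$ and $W=(X^\top,\tilde W)^\top\in\mathbb{R}^{m+2}$. Let $\Gamma$ be a parameter set and $(z,w,\gamma)\mapsto g_\gamma(z,w)\in\mathbb{R}$ a known function (the control function). The model with parameter $(\gamma,\theta)$, $\theta=(\beta_T,\alpha_T,\lambda_T,\beta_C,\alpha_C,\lambda_C,\sigma_T,\sigma_C,\rho)$ with $\beta_T,\beta_C\in\mathbb{R}^{m+1}$, $\alpha_T,\lambda_T,\alpha_C,\lambda_C\in\mathbb{R}$, $\sigma_T,\sigma_C>0$, $\rho\in(-1,1)$, is $$T=X^\top\beta_T+Z\alpha_T+V\lambda_T+\epsilon_T,\qquad C=X^\top\beta_C+Z\alpha_C+V\lambda_C+\epsilon_C,\qquad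 V=g_\gamma(Z,W),$$ where $T,C$ are the log survival and log censoring times; one observes $Y=\min\{T,C\}$, $\Delta=\mathbb{1}(T\le C)$, $W$, $Z$. The true parameter is $(\gamma^*,\theta^* )$. Assumptions: (A1) $(\epsilon_T,\epsilon_C)^\top\sim N_2\big(0,\begin{pmatrix}\sigma_T^2&\rho\sigma_T\sigma_C\\ \rho\sigma_T\sigma_C&\sigma_C^2\end{pmatrix}\big)$ with $\sigma_T,\sigma_C>0$, $|\rho|<1$; (A2) $(\epsilon_T,\epsilon_C)$ is independent of $(W,Z)$; (A3) the covariance matrix of $(\tilde X^\top,Z,V)$ is full rank and $\mathrm{Var}(\tilde W)>0$; (A4) $\mathbb{P}(Y=T\mid W,Z)>0$ and $\mathbb{P}(Y=C\mid W,Z)>0$ almost surely; (A5) the true parameter $\gamma^*$ is identified (uniquely determined by the distribution of the observed data). For $w=(x^\top,\tilde w)^\top$, $z$, $y\in\mathbb{R}$, let $b_T=y-x^\top\beta_T-z\alpha_T-g_\gamma(z,w)\lambda_T$ and $b_C=y-x^\top\beta_C-z\alpha_C-g_\gamma(z,w)\lambda_C$. The conditional sub-densities of $(Y,\Delta)$ given $(W,Z)=(w,z)$ under parameter $(\gamma,\theta)$ are $$f_{Y,\Delta\mid W,Z}(y,1\mid w,z,\gamma;\theta)=\frac1{\sigma_T}\Big[1-\Phi\Big(\frac{b_C-\rho\frac{\sigma_C}{\sigma_T}b_T}{\sigma_C(1-\rho^2)^{1/2}}\Big)\Big]\phi\Big(\frac{b_T}{\sigma_T}\Big),$$ $$f_{Y,\Delta\mid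 W,Z}(y,0\mid w,z,\gamma;\theta)=\frac1{\sigma_C}\Big[1-\Phi\Big(\frac{b_T-\rho\frac{\sigma_T}{\sigma_C}b_C}{\sigma_T(1-\rho^2)^{1/2}}\Big)\Big]\phi\Big(\frac{b_C}{\sigma_C}\Big),$$ where $\Phi,\phi$ are the standard normal distribution and density functions. *)

theory Defs
  imports "HOL-Probability.Probability"
begin

definition std_normal_cdf :: "real \<Rightarrow> real" where
  "std_normal_cdf x = (\<integral>t\<in>{..x}. std_normal_density t \<partial>lborel)"

(* theta = (beta_T, alpha_T, lambda_T, beta_C, alpha_C, lambda_C, sigma_T, sigma_C, rho).
   beta_T, beta_C in R^(m+1) are real lists of length m+1; entry 0 multiplies
   the intercept 1 of X = (1, Xtilde), entry i+1 multiplies Xtilde_i. *)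
record theta =
  betaT :: "real list"
  alphaT :: real
  lambdaT :: real
  betaC :: "real list"
  alphaC :: real
  lambdaC :: real
  sigmaT :: real
  sigmaC :: real
  rho :: real

definition valid_theta :: "nat \<Rightarrow> theta \<Rightarrow> bool" where
  "valid_theta m th \<longleftrightarrow> length (betaT th) = m + 1 \<and> length (betaC th) = m + 1 \<and>
     sigmaT th > 0 \<and> sigmaC th > 0 \<and> \<bar>rho th\<bar> < 1"

(* x^T beta with x = (1, xt), xt a list of length m *)
definition lin :: "real list \<Rightarrow> real list \<Rightarrow> real" where
  "lin xt b = b ! 0 + (\<Sum>i<length xt. xt ! i * b ! (i + 1))"

(* The control function g_gamma(z, w), w = (1, xt, wt), is represented by
   g gamma z xt wt.  The conditional sub-density f_{Y,Delta|W,Z}(y, k | w, z, gamma; theta)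
   for w = (1, xt, wt): *)
definition subdens ::
  "('g \<Rightarrow> real \<Rightarrow> real list \<Rightarrow> real \<Rightarrow> real) \<Rightarrow> 'g \<Rightarrow> theta \<Rightarrow>
   real list \<Rightarrow> real \<Rightarrow> real \<Rightarrow> real \<Rightarrow> nat \<Rightarrow> real" where
  "subdens g \<gamma> th xt wt z y k =
    (let v = g \<gamma> z xt wt;
         bT = y - lin xt (betaT th) - z * alphaT th - v * lambdaT th;
         bC = y - lin xt (betaC th) - z * alphaC th - v * lambdaC th;
         sT = sigmaT th; sC = sigmaC th; r = rho th
     in if k = 1 then
          (1 / sT) * (1 - std_normal_cdf ((bC - r * (sC / sT) * bT) / (sC * sqrt (1 - r\<^sup>2))))
            * std_normal_density (bT / sT)
        else
          (1 / sC) * (1 - std_normal_cdf ((bT - r * (sT / sC) * bC) / (sT * sqrt (1 - r\<^sup>2))))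
            * std_normal_density (bC / sC))"

definition full_rank_mat :: "nat \<Rightarrow> (nat \<Rightarrow> nat \<Rightarrow> real) \<Rightarrow> bool" where
  "full_rank_mat n M \<longleftrightarrow>
     (\<forall>a. (\<forall>i<n. (\<Sum>j<n. M i j * a j) = 0) \<longrightarrow> (\<forall>j<n. a j = 0))"

definition cov_matrix :: "'a measure \<Rightarrow> ('a \<Rightarrow> nat \<Rightarrow> real) \<Rightarrow> nat \<Rightarrow> nat \<Rightarrow> real" where
  "cov_matrix M U i j =
     (\<integral>\<omega>. U \<omega> i * U \<omega> j \<partial>M) - (\<integral>\<omega>. U \<omega> i \<partial>M) * (\<integral>\<omega>. U \<omega> j \<partial>M)"

end

theory Submission
  imports Defs
begin

definition Phi_tail :: "real \<Rightarrow> real" where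
  "Phi_tail u = 1 - std_normal_cdf u"

lemma int_ind_phi: "integrable lborel (\<lambda>t. indicator A t * std_normal_density t)" if "A \<in> sets borel"
  using integrable_real_mult_indicator[of A lborel std_normal_density] that
  by (simp add: mult.commute)

lemma cdf_ind: "std_normal_cdf x = (\<integral>t. indicator {..x} t * std_normal_density t \<partial>lborel)"
  unfolding std_normal_cdf_def set_lebesgue_integral_def by simp

lemma tail_ind: "Phi_tail u = (\<integral>t. indicator {u<..} t * std_normal_density t \<partial>lborel)"
proof -
  have "(\<integral>t. indicator {..u} t * std_normal_density t \<partial>lborel) + (\<integral>t. indicator {u<..} t * std_normal_density t \<partial>lborel)
     = (\<integral>t. indicator {..u} t * std_normal_density t + indicator {u<..} t * std_normal_density t \<partial>lborel)"
    by (rule Bochner_Integration.integral_add[symmetric]) (auto intro: int_ind_phi)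
  also have "\<dots> = (\<integral>t. std_normal_density t \<partial>lborel)"
    by (rule Bochner_Integration.integral_cong) (auto simp: indicator_def)
  also have "\<dots> = 1" by simp
  finally show ?thesis unfolding Phi_tail_def cdf_ind by linarith
qed

lemma cdf_nonneg: "std_normal_cdf x \<ge> 0"
  unfolding cdf_ind by (intro integral_nonneg_AE AE_I2) simp

lemma tail_le1: "Phi_tail u \<le> 1"
  using cdf_nonneg[of u] unfolding Phi_tail_def by simp

lemma interval_pos:
  assumes "u < v"
  shows "(\<integral>t. indicator {u<..v} t * std_normal_density t \<partial>lborel) > 0"
proof -
  define c where "c = std_normal_density (max \<bar>u\<bar> \<bar>v\<bar>)"
  have cpos: "c > 0" unfolding c_def by (simp add: normal_density_pos)
  have "(\<integral>t. indicator {u<..v} t * c \<partial>lborel) \<le> (\<integral>t. indicator {u<..v} t * std_normal_density t \<partial>lborel)"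
  proof (rule integral_mono)
    show "integrable lborel (\<lambda>t. indicator {u<..v} t * c)"
    proof -
      have "integrable lborel (indicat_real {u<..v})" by (rule integrable_real_indicator) (use assms in \<open>auto simp: less_imp_le\<close>)
      then show ?thesis by simp
    qed
    show "integrable lborel (\<lambda>t. indicator {u<..v} t * std_normal_density t)" by (rule int_ind_phi) simp
    fix t
    show "indicator {u<..v} t * c \<le> indicator {u<..v} t * std_normal_density t"
    proof (cases "t \<in> {u<..v}")
      case True
      then have "\<bar>t\<bar> \<le> max \<bar>u\<bar> \<bar>v\<bar>" by auto
      then have "\<bar>t\<bar>\<^sup>2 \<le> (max \<bar>u\<bar> \<bar>v\<bar>)\<^sup>2"
        by (intro power_mono) auto
      then have "t\<^sup>2 \<le> (max \<bar>u\<bar> \<bar>v\<bar>)\<^sup>2" by simp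
      then show ?thesis using True unfolding c_def std_normal_density_def by (simp add: divide_right_mono)
    qed simp
  qed
  moreover have "(\<integral>t. indicator {u<..v} t * c \<partial>lborel) = c * (v - u)"
    using assms by simp
  moreover have "c * (v - u) > 0" using cpos assms by simp
  ultimately show ?thesis by linarith
qed

lemma cdf_strict: assumes "u < v" shows "std_normal_cdf u < std_normal_cdf v"
proof -
  have "std_normal_cdf v = (\<integral>t. indicator {..u} t * std_normal_density t + indicator {u<..v} t * std_normal_density t \<partial>lborel)"
    unfolding cdf_ind using assms
    by (intro Bochner_Integration.integral_cong) (auto simp: indicator_def)
  also have "\<dots> = std_normal_cdf u + (\<integral>t. indicator {u<..v} t * std_normal_density t \<partial>lborel)"
    unfolding cdf_ind by (rule Bochner_Integration.integral_add) (auto intro: int_ind_phi)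
  finally show ?thesis using interval_pos[OF assms] by simp
qed

lemma tail_strict: "u < v \<Longrightarrow> Phi_tail v < Phi_tail u"
  unfolding Phi_tail_def using cdf_strict by simp

lemma tail_mono: "u \<le> v \<Longrightarrow> Phi_tail v \<le> Phi_tail u"
  using tail_strict[of u v] by (cases "u = v") auto

lemma tail_inj: "Phi_tail u = Phi_tail v \<Longrightarrow> u = v"
  using tail_strict[of u v] tail_strict[of v u] by (cases u v rule: linorder_cases) auto

lemma tail_pos: "Phi_tail u > 0"
proof -
  have "(\<integral>t. indicator {u<..u+1} t * std_normal_density t \<partial>lborel) \<le> (\<integral>t. indicator {u<..} t * std_normal_density t \<partial>lborel)"
    by (intro integral_mono int_ind_phi) (auto simp: indicator_def)
  then show ?thesis using interval_pos[of u "u+1"] unfolding tail_ind by simp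
qed

lemma tail_bound:
  assumes "u \<ge> 0"
  shows "Phi_tail u \<le> exp (- u\<^sup>2 / 2)"
proof -
  have "Phi_tail u \<le> (\<integral>t. exp (- u\<^sup>2 / 2) * normal_density u 1 t \<partial>lborel)"
    unfolding tail_ind
  proof (rule integral_mono)
    show "integrable lborel (\<lambda>t. indicator {u<..} t * std_normal_density t)" by (rule int_ind_phi) simp
    show "integrable lborel (\<lambda>t. exp (- u\<^sup>2 / 2) * normal_density u 1 t)" by simp
    fix t
    show "indicator {u<..} t * std_normal_density t \<le> exp (- u\<^sup>2 / 2) * normal_density u 1 t"
    proof (cases "t > u")
      case True
      have "- t\<^sup>2 / 2 \<le> - u\<^sup>2 / 2 + - (t - u)\<^sup>2 / 2"
      proof -
        have h: "0 \<le> u * (t - u)" using True assms by simp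
        have "(t - u)\<^sup>2 = t\<^sup>2 - 2 * (u * t) + u\<^sup>2" by (simp add: power2_diff mult.commute)
        moreover have "u * (t - u) = u * t - u\<^sup>2" by (simp add: algebra_simps power2_eq_square)
        ultimately show ?thesis using h by linarith
      qed
      then have "exp (- t\<^sup>2 / 2) \<le> exp (- u\<^sup>2 / 2) * exp (- (t - u)\<^sup>2 / 2)"
        by (simp add: exp_add[symmetric])
      then show ?thesis using True unfolding std_normal_density_def normal_density_def
        by (simp add: divide_right_mono)
    qed (simp add: normal_density_nonneg)
  qed
  also have "\<dots> = exp (- u\<^sup>2 / 2)" by simp
  finally show ?thesis .
qed

lemma poly_upper:
  fixes c2 c1 c0 M Y0 :: real
  assumes "\<forall>y\<le>Y0. c2 * y\<^sup>2 + c1 * y + c0 \<le> M"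
  shows "c2 \<le> 0"
proof (rule ccontr)
  assume "\<not> c2 \<le> 0"
  then have c2: "c2 > 0" by simp
  define K where "K = \<bar>c1\<bar> + \<bar>c0\<bar> + \<bar>M\<bar> + 1"
  define t where "t = K / c2 + \<bar>Y0\<bar> + 1"
  have Kp: "K > 0" unfolding K_def by simp
  have t1: "t \<ge> 1" unfolding t_def using Kp c2 by simp
  have "-t \<le> Y0" unfolding t_def using Kp c2 by (simp add: add_pos_nonneg) (smt (verit) divide_pos_pos)
  then have le: "c2 * (-t)\<^sup>2 + c1 * (-t) + c0 \<le> M" using assms by blast
  have "c2 * t \<ge> K" unfolding t_def using c2 Kp by (simp add: distrib_left)
  then have "c2 * t * t \<ge> K * t" using t1 by (intro mult_right_mono) auto
  moreover have "K * t = (\<bar>c1\<bar>) * t + (\<bar>c0\<bar> + \<bar>M\<bar> + 1) * t" unfolding K_def by (simp add: algebra_simps)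
  moreover have "(\<bar>c0\<bar> + \<bar>M\<bar> + 1) * t \<ge> \<bar>c0\<bar> + \<bar>M\<bar> + 1" using t1 by (simp add: mult_le_cancel_left1)
  moreover have "c1 * (-t) \<ge> - (\<bar>c1\<bar> * t)" using t1 by (simp add: abs_if)
  moreover have "c2 * (-t)\<^sup>2 = c2 * t * t" by (simp add: power2_eq_square)
  ultimately show False using le by (smt (verit))
qed

lemma lin_lower:
  fixes c1 c0 M Y0 :: real
  assumes "\<forall>y\<le>Y0. c1 * y + c0 \<le> M"
  shows "c1 \<ge> 0"
proof (rule ccontr)
  assume "\<not> c1 \<ge> 0"
  then have c1: "c1 < 0" by simp
  define t where "t = (\<bar>M\<bar> + \<bar>c0\<bar> + 1) / (- c1) + \<bar>Y0\<bar>"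
  have q: "(\<bar>M\<bar> + \<bar>c0\<bar> + 1) / (- c1) \<ge> 0" using c1 by (intro divide_nonneg_pos) auto
  have "-t \<le> Y0" unfolding t_def using q abs_ge_minus_self[of Y0] by linarith
  then have le: "c1 * (-t) + c0 \<le> M" using assms by blast
  have e: "(- c1) * t = (\<bar>M\<bar> + \<bar>c0\<bar> + 1) + (- c1) * \<bar>Y0\<bar>" unfolding t_def using c1
    by (simp add: field_simps)
  have "(- c1) * \<bar>Y0\<bar> \<ge> 0" using c1 by (intro mult_nonneg_nonneg) auto
  then have "(- c1) * t \<ge> \<bar>M\<bar> + \<bar>c0\<bar> + 1" using e by linarith
  moreover have "c1 * (-t) = (- c1) * t" by simp
  ultimately show False using le abs_ge_self[of M] abs_ge_minus_self[of c0] by linarith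
qed

lemma poly_bounded:
  fixes c2 c1 c0 M :: real
  assumes "\<forall>y\<le>0. \<bar>c2 * y\<^sup>2 + c1 * y + c0\<bar> \<le> M"
  shows "c2 = 0 \<and> c1 = 0"
proof -
  have "c2 \<le> 0" by (rule poly_upper[of 0 c2 c1 c0 M]) (use assms in \<open>auto simp: abs_le_iff\<close>)
  moreover have "-c2 \<le> 0" by (rule poly_upper[of 0 "-c2" "-c1" "-c0" M]) (use assms in \<open>auto simp: abs_le_iff\<close>)
  ultimately have c2: "c2 = 0" by simp
  have "c1 \<ge> 0" by (rule lin_lower[of 0 c1 c0 M]) (use assms c2 in \<open>auto simp: abs_le_iff\<close>)
  moreover have "-c1 \<ge> 0" by (rule lin_lower[of 0 "-c1" "-c0" M]) (use assms c2 in \<open>auto simp: abs_le_iff\<close>)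
  ultimately show ?thesis using c2 by simp
qed

definition HH :: "real \<Rightarrow> real \<Rightarrow> real \<Rightarrow> real \<Rightarrow> real \<Rightarrow> real" where
  "HH \<sigma> a \<gamma> \<delta> y = (1/\<sigma>) * Phi_tail (\<gamma>*y+\<delta>) * std_normal_density ((y-a)/\<sigma>)"

lemma logHH:
  assumes "\<sigma> > 0"
  shows "ln (HH \<sigma> a \<gamma> \<delta> y) = - ln \<sigma> + ln (Phi_tail (\<gamma>*y+\<delta>)) - ln (sqrt (2*pi)) - (y-a)\<^sup>2/(2*\<sigma>\<^sup>2)"
proof -
  have P: "Phi_tail (\<gamma>*y+\<delta>) > 0" by (rule tail_pos)
  have "HH \<sigma> a \<gamma> \<delta> y = (1/\<sigma>) * Phi_tail (\<gamma>*y+\<delta>) * ((1 / sqrt (2*pi)) * exp (- ((y-a)/\<sigma>)\<^sup>2 / 2))"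
    unfolding HH_def std_normal_density_def by simp
  also have "ln \<dots> = ln (1/\<sigma>) + ln (Phi_tail (\<gamma>*y+\<delta>)) + (ln (1 / sqrt (2*pi)) + ln (exp (- ((y-a)/\<sigma>)\<^sup>2 / 2)))"
  proof -
    have p1: "1/\<sigma> > 0" using assms by simp
    have p2: "1 / sqrt (2*pi) > 0" by simp
    have p3: "exp (- ((y-a)/\<sigma>)\<^sup>2 / 2) > 0" by simp
    have "ln ((1/\<sigma>) * Phi_tail (\<gamma>*y+\<delta>) * ((1 / sqrt (2*pi)) * exp (- ((y-a)/\<sigma>)\<^sup>2 / 2)))
       = ln ((1/\<sigma>) * Phi_tail (\<gamma>*y+\<delta>)) + ln ((1 / sqrt (2*pi)) * exp (- ((y-a)/\<sigma>)\<^sup>2 / 2))"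
      by (rule ln_mult_pos) (use p1 p2 p3 P in auto)
    also have "ln ((1/\<sigma>) * Phi_tail (\<gamma>*y+\<delta>)) = ln (1/\<sigma>) + ln (Phi_tail (\<gamma>*y+\<delta>))"
      by (rule ln_mult_pos) (use p1 P in auto)
    also have "ln ((1 / sqrt (2*pi)) * exp (- ((y-a)/\<sigma>)\<^sup>2 / 2)) = ln (1 / sqrt (2*pi)) + ln (exp (- ((y-a)/\<sigma>)\<^sup>2 / 2))"
      by (rule ln_mult_pos) (use p2 p3 in auto)
    finally show ?thesis .
  qed
  also have "\<dots> = - ln \<sigma> + ln (Phi_tail (\<gamma>*y+\<delta>)) - ln (sqrt (2*pi)) - (y-a)\<^sup>2/(2*\<sigma>\<^sup>2)"
    using assms by (simp add: ln_div power_divide)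
  finally show ?thesis .
qed

lemma E_poly:
  fixes \<sigma> \<sigma>' :: real
  assumes "\<sigma> > 0" "\<sigma>' > 0"
  shows "(y-a')\<^sup>2/(2*\<sigma>'\<^sup>2) - (y-a)\<^sup>2/(2*\<sigma>\<^sup>2)
    = (1/(2*\<sigma>'\<^sup>2) - 1/(2*\<sigma>\<^sup>2)) * y\<^sup>2 + (a/\<sigma>\<^sup>2 - a'/\<sigma>'\<^sup>2) * y + (a'\<^sup>2/(2*\<sigma>'\<^sup>2) - a\<^sup>2/(2*\<sigma>\<^sup>2))"
  using assms by (simp add: field_simps power2_eq_square)

lemma E_eq:
  assumes "\<sigma> > 0" "\<sigma>' > 0" "HH \<sigma> a \<gamma> \<delta> y = HH \<sigma>' a' \<gamma>' \<delta>' y"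
  shows "(y-a')\<^sup>2/(2*\<sigma>'\<^sup>2) - (y-a)\<^sup>2/(2*\<sigma>\<^sup>2)
     = ln \<sigma> - ln \<sigma>' + ln (Phi_tail (\<gamma>'*y+\<delta>')) - ln (Phi_tail (\<gamma>*y+\<delta>))"
proof -
  have "ln (HH \<sigma> a \<gamma> \<delta> y) = ln (HH \<sigma>' a' \<gamma>' \<delta>' y)" using assms(3) by simp
  then show ?thesis using logHH[OF assms(1), of a \<gamma> \<delta> y] logHH[OF assms(2), of a' \<gamma>' \<delta>' y] by linarith
qed

lemma HH_refl: "HH \<sigma> a \<gamma> \<delta> (-y) = HH \<sigma> (-a) (-\<gamma>) \<delta> y"
  unfolding HH_def normal_density_def by (simp add: power2_eq_square algebra_simps)

lemma ln_tail_le0: "ln (Phi_tail u) \<le> 0"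
  using tail_pos[of u] tail_le1[of u] by simp

lemma ln_tail_mono: "u \<le> v \<Longrightarrow> ln (Phi_tail v) \<le> ln (Phi_tail u)"
  using tail_pos tail_mono by simp

lemma ln_tail_bound: "u \<ge> 0 \<Longrightarrow> ln (Phi_tail u) \<le> - u\<^sup>2/2"
  using tail_bound[of u] tail_pos[of u] by (metis ln_exp ln_le_cancel_iff exp_gt_zero)

lemma coreA:
  assumes s: "\<sigma> > 0" "\<sigma>' > 0" and g: "\<gamma> \<ge> 0" "\<gamma>' \<ge> 0"
    and H: "\<forall>y. HH \<sigma> a \<gamma> \<delta> y = HH \<sigma>' a' \<gamma>' \<delta>' y"
  shows "\<sigma> = \<sigma>' \<and> a = a' \<and> \<gamma> = \<gamma>' \<and> \<delta> = \<delta>'"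
proof -
  define M where "M = \<bar>ln \<sigma> - ln \<sigma>'\<bar> + \<bar>ln (Phi_tail \<delta>')\<bar> + \<bar>ln (Phi_tail \<delta>)\<bar>"
  have "\<forall>y\<le>0. \<bar>(1/(2*\<sigma>'\<^sup>2) - 1/(2*\<sigma>\<^sup>2)) * y\<^sup>2 + (a/\<sigma>\<^sup>2 - a'/\<sigma>'\<^sup>2) * y + (a'\<^sup>2/(2*\<sigma>'\<^sup>2) - a\<^sup>2/(2*\<sigma>\<^sup>2))\<bar> \<le> M"
  proof (intro allI impI)
    fix y :: real assume y: "y \<le> 0"
    have "\<gamma>*y \<le> 0" using g y by (simp add: mult_nonneg_nonpos)
    then have l1: "ln (Phi_tail \<delta>) \<le> ln (Phi_tail (\<gamma>*y+\<delta>))" by (intro ln_tail_mono) simp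
    have "\<gamma>'*y \<le> 0" using g y by (simp add: mult_nonneg_nonpos)
    then have l2: "ln (Phi_tail \<delta>') \<le> ln (Phi_tail (\<gamma>'*y+\<delta>'))" by (intro ln_tail_mono) simp
    note e = E_eq[OF s H[rule_format, of y]]
    show "\<bar>(1/(2*\<sigma>'\<^sup>2) - 1/(2*\<sigma>\<^sup>2)) * y\<^sup>2 + (a/\<sigma>\<^sup>2 - a'/\<sigma>'\<^sup>2) * y + (a'\<^sup>2/(2*\<sigma>'\<^sup>2) - a\<^sup>2/(2*\<sigma>\<^sup>2))\<bar> \<le> M"
      unfolding E_poly[OF s, symmetric] e M_def
      using l1 l2 ln_tail_le0[of "\<gamma>*y+\<delta>"] ln_tail_le0[of "\<gamma>'*y+\<delta>'"]
      by (simp add: abs_le_iff) linarith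
  qed
  from poly_bounded[OF this] have c2: "1/(2*\<sigma>'\<^sup>2) - 1/(2*\<sigma>\<^sup>2) = 0" and c1: "a/\<sigma>\<^sup>2 - a'/\<sigma>'\<^sup>2 = 0" by auto
  from c2 s have "\<sigma>'\<^sup>2 = \<sigma>\<^sup>2" by (simp add: field_simps)
  then have ss: "\<sigma> = \<sigma>'" using s by (simp add: power2_eq_iff_nonneg)
  with c1 s have aa: "a = a'" by (simp add: field_simps)
  have PP: "Phi_tail (\<gamma>*y+\<delta>) = Phi_tail (\<gamma>'*y+\<delta>')" for y
  proof -
    have "(1/\<sigma> * std_normal_density ((y-a)/\<sigma>)) * Phi_tail (\<gamma>*y+\<delta>) = (1/\<sigma> * std_normal_density ((y-a)/\<sigma>)) * Phi_tail (\<gamma>'*y+\<delta>')"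
      using H[rule_format, of y] ss aa unfolding HH_def by (simp add: ac_simps)
    moreover have "1/\<sigma> * std_normal_density ((y-a)/\<sigma>) \<noteq> 0" using s normal_density_pos[of 1 0 "(y-a)/\<sigma>"] by simp
    ultimately show ?thesis by simp
  qed
  from PP[of 0] have dd: "\<delta> = \<delta>'" by (auto dest: tail_inj)
  from PP[of 1] dd have "\<gamma> = \<gamma>'" by (auto dest: tail_inj)
  with ss aa dd show ?thesis by simp
qed

lemma coreB1:
  assumes s: "\<sigma> > 0" "\<sigma>' > 0" and g: "\<gamma> \<ge> 0" "\<gamma>' < 0"
    and H: "\<forall>y. HH \<sigma> a \<gamma> \<delta> y = HH \<sigma>' a' \<gamma>' \<delta>' y"
  shows "1/(2*\<sigma>'\<^sup>2) - 1/(2*\<sigma>\<^sup>2) + \<gamma>'\<^sup>2/2 \<le> 0"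
proof -
  define M where "M = ln \<sigma> - ln \<sigma>' - ln (Phi_tail \<delta>)"
  have "\<forall>y\<le>min 0 (-\<delta>'/\<gamma>'). (1/(2*\<sigma>'\<^sup>2) - 1/(2*\<sigma>\<^sup>2) + \<gamma>'\<^sup>2/2) * y\<^sup>2 + (a/\<sigma>\<^sup>2 - a'/\<sigma>'\<^sup>2 + \<gamma>'*\<delta>') * y + (a'\<^sup>2/(2*\<sigma>'\<^sup>2) - a\<^sup>2/(2*\<sigma>\<^sup>2) + \<delta>'\<^sup>2/2) \<le> M"
  proof (intro allI impI)
    fix y :: real assume y: "y \<le> min 0 (-\<delta>'/\<gamma>')"
    have "\<gamma>*y \<le> 0" using g y by (simp add: mult_nonneg_nonpos)
    then have l1: "ln (Phi_tail \<delta>) \<le> ln (Phi_tail (\<gamma>*y+\<delta>))" by (intro ln_tail_mono) simp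
    have "\<gamma>' * (-\<delta>'/\<gamma>') \<le> \<gamma>'*y" using g y by (intro mult_left_mono_neg) auto
    then have "0 \<le> \<gamma>'*y+\<delta>'" using g by simp
    then have l2: "ln (Phi_tail (\<gamma>'*y+\<delta>')) \<le> - (\<gamma>'*y+\<delta>')\<^sup>2/2" by (rule ln_tail_bound)
    note e = E_eq[OF s H[rule_format, of y]]
    have eq2: "(1/(2*\<sigma>'\<^sup>2) - 1/(2*\<sigma>\<^sup>2) + \<gamma>'\<^sup>2/2) * y\<^sup>2 + (a/\<sigma>\<^sup>2 - a'/\<sigma>'\<^sup>2 + \<gamma>'*\<delta>') * y + (a'\<^sup>2/(2*\<sigma>'\<^sup>2) - a\<^sup>2/(2*\<sigma>\<^sup>2) + \<delta>'\<^sup>2/2)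
      = ((1/(2*\<sigma>'\<^sup>2) - 1/(2*\<sigma>\<^sup>2)) * y\<^sup>2 + (a/\<sigma>\<^sup>2 - a'/\<sigma>'\<^sup>2) * y + (a'\<^sup>2/(2*\<sigma>'\<^sup>2) - a\<^sup>2/(2*\<sigma>\<^sup>2))) + (\<gamma>'*y+\<delta>')\<^sup>2/2"
      by (simp add: power2_eq_square algebra_simps)
    show "(1/(2*\<sigma>'\<^sup>2) - 1/(2*\<sigma>\<^sup>2) + \<gamma>'\<^sup>2/2) * y\<^sup>2 + (a/\<sigma>\<^sup>2 - a'/\<sigma>'\<^sup>2 + \<gamma>'*\<delta>') * y + (a'\<^sup>2/(2*\<sigma>'\<^sup>2) - a\<^sup>2/(2*\<sigma>\<^sup>2) + \<delta>'\<^sup>2/2) \<le> M"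
      unfolding eq2 E_poly[OF s, symmetric] e M_def
      using l1 l2 by linarith
  qed
  then show ?thesis by (rule poly_upper)
qed

lemma core_all:
  assumes s: "\<sigma> > 0" "\<sigma>' > 0"
    and H: "\<forall>y. HH \<sigma> a \<gamma> \<delta> y = HH \<sigma>' a' \<gamma>' \<delta>' y"
  shows "\<sigma> = \<sigma>' \<and> a = a' \<and> \<gamma> = \<gamma>' \<and> \<delta> = \<delta>'"
proof -
  have Hs: "\<forall>y. HH \<sigma>' a' \<gamma>' \<delta>' y = HH \<sigma> a \<gamma> \<delta> y" using H by simp
  have Hr: "\<forall>y. HH \<sigma> (-a) (-\<gamma>) \<delta> y = HH \<sigma>' (-a') (-\<gamma>') \<delta>' y"
    using H HH_refl by metis
  have Hrs: "\<forall>y. HH \<sigma>' (-a') (-\<gamma>') \<delta>' y = HH \<sigma> (-a) (-\<gamma>) \<delta> y" using Hr by simp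
  consider "\<gamma> \<ge> 0" "\<gamma>' \<ge> 0" | "\<gamma> \<le> 0" "\<gamma>' \<le> 0" | "\<gamma> > 0" "\<gamma>' < 0" | "\<gamma> < 0" "\<gamma>' > 0"
    by linarith
  then show ?thesis
  proof cases
    case 1 then show ?thesis using coreA[OF s _ _ H] by simp
  next
    case 2 then show ?thesis using coreA[OF s _ _ Hr] by simp
  next
    case 3
    have "1/(2*\<sigma>'\<^sup>2) - 1/(2*\<sigma>\<^sup>2) + \<gamma>'\<^sup>2/2 \<le> 0" using coreB1[OF s _ _ H] 3 by simp
    moreover have "1/(2*\<sigma>\<^sup>2) - 1/(2*\<sigma>'\<^sup>2) + (-\<gamma>)\<^sup>2/2 \<le> 0"
      using coreB1[OF s(2,1) _ _ Hrs] 3 by simp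
    moreover have "\<gamma>\<^sup>2 > 0" using 3 by simp
    moreover have "\<gamma>'\<^sup>2 \<ge> 0" by simp
    ultimately have False unfolding power2_minus by linarith
    then show ?thesis ..
  next
    case 4
    have "1/(2*\<sigma>\<^sup>2) - 1/(2*\<sigma>'\<^sup>2) + \<gamma>\<^sup>2/2 \<le> 0" using coreB1[OF s(2,1) _ _ Hs] 4 by simp
    moreover have "1/(2*\<sigma>'\<^sup>2) - 1/(2*\<sigma>\<^sup>2) + (-\<gamma>')\<^sup>2/2 \<le> 0"
      using coreB1[OF s _ _ Hr] 4 by simp
    moreover have "\<gamma>\<^sup>2 > 0" using 4 by simp
    moreover have "\<gamma>'\<^sup>2 \<ge> 0" by simp
    ultimately have False unfolding power2_minus by linarith
    then show ?thesis ..
  qed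
qed

lemma sq_lt1: "\<bar>r\<bar> < (1::real) \<Longrightarrow> 1 - r\<^sup>2 > 0"
  using abs_square_less_1[of r] by simp

lemma rho_half:
  fixes r r' s s' :: real
  assumes r: "\<bar>r\<bar> < 1" "\<bar>r'\<bar> < 1" and s: "s = sqrt (1 - r\<^sup>2)" "s' = sqrt (1 - r'\<^sup>2)"
    and e: "s' * (1 - r) = s * (1 - r')"
  shows "r = r'"
proof -
  have p: "1 - r\<^sup>2 > 0" "1 - r'\<^sup>2 > 0" using sq_lt1 r by auto
  have "(s' * (1 - r))\<^sup>2 = (s * (1 - r'))\<^sup>2" using e by simp
  then have "(1 - r'\<^sup>2) * (1 - r)\<^sup>2 = (1 - r\<^sup>2) * (1 - r')\<^sup>2"
    using p s by (simp add: power_mult_distrib)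
  then have "((1 + r') * (1 - r)) * ((1 - r') * (1 - r)) = ((1 + r) * (1 - r')) * ((1 - r') * (1 - r))"
    by (simp add: power2_eq_square algebra_simps)
  moreover have "(1 - r') * (1 - r) \<noteq> 0" using r by auto
  ultimately have "(1 + r') * (1 - r) = (1 + r) * (1 - r')" by simp
  then show ?thesis by (simp add: algebra_simps)
qed

lemma rho_alg:
  fixes r r' s s' Y :: real
  assumes r: "\<bar>r\<bar> < 1" "\<bar>r'\<bar> < 1" and s: "s = sqrt (1 - r\<^sup>2)" "s' = sqrt (1 - r'\<^sup>2)"
    and e1: "s' * (1 - r * Y) = s * (1 - r' * Y)"
    and e2: "s' * (Y - r) = s * (Y - r')"
  shows "r = r'"
proof -
  define e where "e = s' - s"
  define f where "f = s' * r - s * r'"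
  have 1: "e = f * Y" using e1 unfolding e_def f_def by (simp add: algebra_simps)
  have 2: "e * Y = f" using e2 unfolding e_def f_def by (simp add: algebra_simps)
  have "e * e = f * f" using 1 2 by (metis mult.assoc mult.commute)
  then have "e = f \<or> e = -f" by algebra
  then show ?thesis
  proof
    assume "e = f"
    then have "s' * (1 - r) = s * (1 - r')" unfolding e_def f_def by (simp add: algebra_simps)
    then show ?thesis by (rule rho_half[OF r s])
  next
    assume "e = -f"
    then have "s' * (1 - (-r)) = s * (1 - (-r'))" unfolding e_def f_def by (simp add: algebra_simps)
    then have "-r = -r'" using rho_half[of "-r" "-r'" s s'] r s by simp
    then show ?thesis by simp
  qed
qed

definition g1 :: "real \<Rightarrow> real \<Rightarrow> real \<Rightarrow> real" where
  "g1 sT sC r = (1 - r * (sC / sT)) / (sC * sqrt (1 - r\<^sup>2))"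
definition d1 :: "real \<Rightarrow> real \<Rightarrow> real \<Rightarrow> real \<Rightarrow> real \<Rightarrow> real" where
  "d1 sT sC r aT aC = (- aC + r * (sC / sT) * aT) / (sC * sqrt (1 - r\<^sup>2))"

lemma g1d1:
  assumes "sT > 0" "sC > 0" "\<bar>r\<bar> < 1"
  shows "g1 sT sC r * y + d1 sT sC r aT aC = ((y - aC) - r * (sC / sT) * (y - aT)) / (sC * sqrt (1 - r\<^sup>2))"
proof -
  have "sqrt (1 - r\<^sup>2) > 0" using sq_lt1[OF assms(3)] by simp
  then show ?thesis unfolding g1_def d1_def using assms by (simp add: field_simps)
qed

lemma omega_ident:
  fixes sT sC r aT aC sT' sC' r' aT' aC' :: real
  assumes p: "sT > 0" "sC > 0" "\<bar>r\<bar> < 1" "sT' > 0" "sC' > 0" "\<bar>r'\<bar> < 1"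
    and F1: "\<forall>y. HH sT aT (g1 sT sC r) (d1 sT sC r aT aC) y = HH sT' aT' (g1 sT' sC' r') (d1 sT' sC' r' aT' aC') y"
    and F0: "\<forall>y. HH sC aC (g1 sC sT r) (d1 sC sT r aC aT) y = HH sC' aC' (g1 sC' sT' r') (d1 sC' sT' r' aC' aT') y"
  shows "sT = sT' \<and> sC = sC' \<and> r = r' \<and> aT = aT' \<and> aC = aC'"
proof -
  from core_all[OF p(1,4) F1] have A: "sT = sT'" "aT = aT'"
    "g1 sT sC r = g1 sT' sC' r'" "d1 sT sC r aT aC = d1 sT' sC' r' aT' aC'" by auto
  from core_all[OF p(2,5) F0] have B: "sC = sC'" "aC = aC'"
    "g1 sC sT r = g1 sC' sT' r'" "d1 sC sT r aC aT = d1 sC' sT' r' aC' aT'" by auto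
  define s where "s = sqrt (1 - r\<^sup>2)"
  define s' where "s' = sqrt (1 - r'\<^sup>2)"
  have sp: "s > 0" "s' > 0" unfolding s_def s'_def using sq_lt1 p by auto
  define y0 where "y0 = aC + 1"
  define Y where "Y = (sC / sT) * (y0 - aT)"
  have L1: "((y0 - aC) - r * (sC / sT) * (y0 - aT)) / (sC * s) = ((y0 - aC) - r' * (sC / sT) * (y0 - aT)) / (sC * s')"
    using g1d1[OF p(1-3), of y0 aT aC] g1d1[OF p(4-6), of y0 aT' aC'] A B unfolding s_def s'_def by simp
  then have "(1 - r * Y) / (sC * s) = (1 - r' * Y) / (sC * s')" unfolding Y_def y0_def by (simp add: ac_simps)
  then have "(1 - r * Y) * (sC * s') = (1 - r' * Y) * (sC * s)" using sp p by (simp add: frac_eq_eq)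
  then have "sC * (s' * (1 - r * Y)) = sC * (s * (1 - r' * Y))" by (simp add: ac_simps)
  then have e1: "s' * (1 - r * Y) = s * (1 - r' * Y)" using p by simp
  have L0: "((y0 - aT) - r * (sT / sC) * (y0 - aC)) / (sT * s) = ((y0 - aT) - r' * (sT / sC) * (y0 - aC)) / (sT * s')"
    using g1d1[OF p(2,1,3), of y0 aC aT] g1d1[OF p(5,4,6), of y0 aC' aT'] A B unfolding s_def s'_def by simp
  then have "((y0 - aT) - r * (sT / sC)) / (sT * s) = ((y0 - aT) - r' * (sT / sC)) / (sT * s')" unfolding y0_def by simp
  then have "((y0 - aT) - r * (sT / sC)) * (sT * s') = ((y0 - aT) - r' * (sT / sC)) * (sT * s)" using sp p by (simp add: frac_eq_eq)
  then have "sT * (s' * ((y0 - aT) - r * (sT / sC))) = sT * (s * ((y0 - aT) - r' * (sT / sC)))" by (simp add: ac_simps)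
  then have N2: "s' * ((y0 - aT) - r * (sT / sC)) = s * ((y0 - aT) - r' * (sT / sC))" using p by simp
  have Yr: "Y - r = (sC / sT) * ((y0 - aT) - r * (sT / sC))" using p unfolding Y_def by (simp add: field_simps)
  have Yr': "Y - r' = (sC / sT) * ((y0 - aT) - r' * (sT / sC))" using p unfolding Y_def by (simp add: field_simps)
  have e2: "s' * (Y - r) = s * (Y - r')" unfolding Yr Yr' using N2 by (metis mult.left_commute)
  have "r = r'" by (rule rho_alg[OF p(3,6) s_def s'_def e1 e2])
  with A B show ?thesis by simp
qed

lemma abs_prod_le: "\<bar>a * b\<bar> \<le> a\<^sup>2 + (b::real)\<^sup>2"
proof -
  have h: "0 \<le> (\<bar>a\<bar> - \<bar>b\<bar>)\<^sup>2" by simp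
  have "(\<bar>a\<bar> - \<bar>b\<bar>)\<^sup>2 = a\<^sup>2 + b\<^sup>2 - 2 * (\<bar>a\<bar> * \<bar>b\<bar>)" by (simp add: power2_diff)
  moreover have "\<bar>a * b\<bar> = \<bar>a\<bar> * \<bar>b\<bar>" by (simp add: abs_mult)
  moreover have "\<bar>a\<bar> * \<bar>b\<bar> \<ge> 0" by simp
  ultimately show ?thesis using h by linarith
qed

lemma regress:
  fixes \<mu> :: "'a measure" and Xt :: "'a \<Rightarrow> real list" and Z V :: "'a \<Rightarrow> real"
    and U :: "'a \<Rightarrow> nat \<Rightarrow> real"
  assumes Udef: "U = (\<lambda>\<omega> i. if i < m then Xt \<omega> ! i else if i = m then Z \<omega> else V \<omega>)"
    and prob: "prob_space \<mu>"
    and dimX: "\<forall>\<omega>\<in>space \<mu>. length (Xt \<omega>) = m"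
    and A3_meas: "\<forall>i<m+2. (\<lambda>\<omega>. U \<omega> i) \<in> borel_measurable \<mu>"
    and A3_int: "\<forall>i<m+2. integrable \<mu> (\<lambda>\<omega>. (U \<omega> i)\<^sup>2)"
    and A3_rank: "full_rank_mat (m+2) (cov_matrix \<mu> U)"
    and lb: "length b = m + 1" "length b' = m + 1"
    and eqAE: "AE \<omega> in \<mu>. lin (Xt \<omega>) b + Z \<omega> * \<alpha> + V \<omega> * l = lin (Xt \<omega>) b' + Z \<omega> * \<alpha>' + V \<omega> * l'"
  shows "b = b' \<and> \<alpha> = \<alpha>' \<and> l = l'"
proof -
  interpret prob_space \<mu> by (rule prob)
  define c where "c j = (if j < m then b!(j+1) - b'!(j+1) else if j = m then \<alpha> - \<alpha>' else l - l')" for j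
  define d0 where "d0 = b!0 - b'!0"
  have mU: "(\<lambda>\<omega>. U \<omega> i) \<in> borel_measurable \<mu>" if "i < m+2" for i using A3_meas that by blast
  have iU2: "integrable \<mu> (\<lambda>\<omega>. (U \<omega> i)\<^sup>2)" if "i < m+2" for i using A3_int that by blast
  have iU: "integrable \<mu> (\<lambda>\<omega>. U \<omega> i)" if "i < m+2" for i
    by (rule square_integrable_imp_integrable[OF mU[OF that] iU2[OF that]])
  have iUU: "integrable \<mu> (\<lambda>\<omega>. U \<omega> i * U \<omega> j)" if "i < m+2" "j < m+2" for i j
  proof (rule Bochner_Integration.integrable_bound[where f="\<lambda>\<omega>. (U \<omega> i)\<^sup>2 + (U \<omega> j)\<^sup>2"])
    show "integrable \<mu> (\<lambda>\<omega>. (U \<omega> i)\<^sup>2 + (U \<omega> j)\<^sup>2)" using iU2 that by simp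
    show "(\<lambda>\<omega>. U \<omega> i * U \<omega> j) \<in> borel_measurable \<mu>"
      using mU that by (intro borel_measurable_times) auto
    show "AE \<omega> in \<mu>. norm (U \<omega> i * U \<omega> j) \<le> norm ((U \<omega> i)\<^sup>2 + (U \<omega> j)\<^sup>2)"
      using abs_prod_le by (intro AE_I2) simp
  qed
  define S where "S \<omega> = (\<Sum>j<m+2. c j * U \<omega> j)" for \<omega>
  have mS: "S \<in> borel_measurable \<mu>" unfolding S_def
    using mU by (intro borel_measurable_sum borel_measurable_times) auto
  have keyAE: "AE \<omega> in \<mu>. S \<omega> = - d0"
    using eqAE
  proof (rule AE_mp, intro AE_I2 impI)
    fix \<omega> assume \<omega>: "\<omega> \<in> space \<mu>"
      and e: "lin (Xt \<omega>) b + Z \<omega> * \<alpha> + V \<omega> * l = lin (Xt \<omega>) b' + Z \<omega> * \<alpha>' + V \<omega> * l'"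
    have len: "length (Xt \<omega>) = m" using dimX \<omega> by blast
    have "S \<omega> = (\<Sum>j<m. c j * U \<omega> j) + c m * U \<omega> m + c (Suc m) * U \<omega> (Suc m)"
      unfolding S_def by (simp add: numeral_2_eq_2)
    also have "(\<Sum>j<m. c j * U \<omega> j) = (\<Sum>i<m. Xt \<omega> ! i * b ! (i+1)) - (\<Sum>i<m. Xt \<omega> ! i * b' ! (i+1))"
      unfolding sum_subtractf[symmetric] by (intro sum.cong) (auto simp: c_def Udef algebra_simps)
    also have "c m * U \<omega> m = Z \<omega> * \<alpha> - Z \<omega> * \<alpha>'" by (simp add: c_def Udef algebra_simps)
    also have "c (Suc m) * U \<omega> (Suc m) = V \<omega> * l - V \<omega> * l'" by (simp add: c_def Udef algebra_simps)
    finally show "S \<omega> = - d0" using e len unfolding lin_def d0_def by simp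
  qed
  have cov0: "(\<Sum>j<m+2. cov_matrix \<mu> U i j * c j) = 0" if i: "i < m+2" for i
  proof -
    have 1: "(\<integral>\<omega>. U \<omega> i * S \<omega> \<partial>\<mu>) = (\<Sum>j<m+2. c j * (\<integral>\<omega>. U \<omega> i * U \<omega> j \<partial>\<mu>))"
    proof -
      have "(\<lambda>\<omega>. U \<omega> i * S \<omega>) = (\<lambda>\<omega>. \<Sum>j<m+2. c j * (U \<omega> i * U \<omega> j))"
        unfolding S_def sum_distrib_left by (intro ext sum.cong refl) (simp add: ac_simps)
      then have "(\<integral>\<omega>. U \<omega> i * S \<omega> \<partial>\<mu>) = (\<integral>\<omega>. (\<Sum>j<m+2. c j * (U \<omega> i * U \<omega> j)) \<partial>\<mu>)"
        by (rule arg_cong)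
      also have "\<dots> = (\<Sum>j<m+2. (\<integral>\<omega>. c j * (U \<omega> i * U \<omega> j) \<partial>\<mu>))"
        by (rule Bochner_Integration.integral_sum) (use iUU i in auto)
      also have "\<dots> = (\<Sum>j<m+2. c j * (\<integral>\<omega>. U \<omega> i * U \<omega> j \<partial>\<mu>))"
        by (rule sum.cong) auto
      finally show ?thesis .
    qed
    have 2: "(\<integral>\<omega>. S \<omega> \<partial>\<mu>) = (\<Sum>j<m+2. c j * (\<integral>\<omega>. U \<omega> j \<partial>\<mu>))"
    proof -
      have "(\<integral>\<omega>. S \<omega> \<partial>\<mu>) = (\<Sum>j<m+2. (\<integral>\<omega>. c j * U \<omega> j \<partial>\<mu>))"
        unfolding S_def by (rule Bochner_Integration.integral_sum) (use iU in auto)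
      also have "\<dots> = (\<Sum>j<m+2. c j * (\<integral>\<omega>. U \<omega> j \<partial>\<mu>))"
        by (rule sum.cong) auto
      finally show ?thesis .
    qed
    have 3: "(\<integral>\<omega>. U \<omega> i * S \<omega> \<partial>\<mu>) = (\<integral>\<omega>. U \<omega> i * (- d0) \<partial>\<mu>)"
      using keyAE mU[OF i] mS by (intro integral_cong_AE) auto
    have 4: "(\<integral>\<omega>. S \<omega> \<partial>\<mu>) = (\<integral>\<omega>. - d0 \<partial>\<mu>)"
      using keyAE mS by (intro integral_cong_AE) auto
    have "(\<Sum>j<m+2. cov_matrix \<mu> U i j * c j)
        = (\<Sum>j<m+2. c j * (\<integral>\<omega>. U \<omega> i * U \<omega> j \<partial>\<mu>)) - (\<integral>\<omega>. U \<omega> i \<partial>\<mu>) * (\<Sum>j<m+2. c j * (\<integral>\<omega>. U \<omega> j \<partial>\<mu>))"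
      unfolding cov_matrix_def by (simp add: sum_subtractf sum_distrib_left algebra_simps)
    also have "\<dots> = 0" unfolding 1[symmetric] 2[symmetric] 3 4 by (simp add: prob_space)
    finally show ?thesis .
  qed
  have c0: "\<forall>j<m+2. c j = 0"
    using A3_rank cov0 unfolding full_rank_mat_def by (auto simp: mult.commute)
  have "AE \<omega> in \<mu>. S \<omega> = 0" unfolding S_def using c0 by simp
  with keyAE have "AE \<omega> in \<mu>. d0 = 0" by eventually_elim simp
  then have d00: "d0 = 0" by simp
  have "\<alpha> = \<alpha>'" using c0[rule_format, of m] by (simp add: c_def)
  moreover have "l = l'" using c0[rule_format, of "Suc m"] by (simp add: c_def)
  moreover have "b = b'"
  proof (rule nth_equalityI)
    show "length b = length b'" using lb by simp
    fix j assume "j < length b"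
    then have j: "j < m + 1" using lb by simp
    show "b ! j = b' ! j"
    proof (cases j)
      case 0 then show ?thesis using d00 by (simp add: d0_def)
    next
      case (Suc i)
      then have "i < m" using j by simp
      then show ?thesis using c0[rule_format, of i] Suc by (simp add: c_def)
    qed
  qed
  ultimately show ?thesis by simp
qed

lemma subdens1:
  assumes "sigmaT th > 0" "sigmaC th > 0" "\<bar>rho th\<bar> < 1"
  shows "subdens g \<gamma> th xt wt z y 1 = HH (sigmaT th) (lin xt (betaT th) + z * alphaT th + g \<gamma> z xt wt * lambdaT th)
     (g1 (sigmaT th) (sigmaC th) (rho th))
     (d1 (sigmaT th) (sigmaC th) (rho th) (lin xt (betaT th) + z * alphaT th + g \<gamma> z xt wt * lambdaT th)
        (lin xt (betaC th) + z * alphaC th + g \<gamma> z xt wt * lambdaC th)) y"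
  unfolding subdens_def Let_def HH_def Phi_tail_def g1d1[OF assms] by (simp add: diff_diff_eq)

lemma subdens0:
  assumes "sigmaT th > 0" "sigmaC th > 0" "\<bar>rho th\<bar> < 1"
  shows "subdens g \<gamma> th xt wt z y 0 = HH (sigmaC th) (lin xt (betaC th) + z * alphaC th + g \<gamma> z xt wt * lambdaC th)
     (g1 (sigmaC th) (sigmaT th) (rho th))
     (d1 (sigmaC th) (sigmaT th) (rho th) (lin xt (betaC th) + z * alphaC th + g \<gamma> z xt wt * lambdaC th)
        (lin xt (betaT th) + z * alphaT th + g \<gamma> z xt wt * lambdaT th)) y"
  unfolding subdens_def Let_def HH_def Phi_tail_def g1d1[OF assms(2,1,3)] by (simp add: diff_diff_eq)

theorem theorem1:
  fixes m :: nat
    and \<mu> :: "'a measure"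
    and Xt :: "'a \<Rightarrow> real list" and Wt :: "'a \<Rightarrow> real" and Z :: "'a \<Rightarrow> real"
    and \<Gamma> :: "'g set"
    and g :: "'g \<Rightarrow> real \<Rightarrow> real list \<Rightarrow> real \<Rightarrow> real"
    and \<gamma> \<gamma>s :: 'g
    and \<theta> \<theta>s :: theta
  defines "V \<equiv> (\<lambda>\<omega>. g \<gamma>s (Z \<omega>) (Xt \<omega>) (Wt \<omega>))"
  defines "U \<equiv> (\<lambda>\<omega> i. if i < m then Xt \<omega> ! i else if i = m then Z \<omega> else V \<omega>)"
  assumes prob: "prob_space \<mu>"
    and dimX: "\<forall>\<omega>\<in>space \<mu>. length (Xt \<omega>) = m"
    and params: "\<gamma> \<in> \<Gamma>" "\<gamma>s \<in> \<Gamma>" "valid_theta m \<theta>" "valid_theta m \<theta>s"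
    (* (A3): covariance matrix of (Xtilde, Z, V) exists and is full rank; Var(Wtilde) > 0 *)
    and A3_meas: "\<forall>i<m+2. (\<lambda>\<omega>. U \<omega> i) \<in> borel_measurable \<mu>"
    and A3_int: "\<forall>i<m+2. integrable \<mu> (\<lambda>\<omega>. (U \<omega> i)\<^sup>2)"
    and A3_rank: "full_rank_mat (m+2) (cov_matrix \<mu> U)"
    and A3_W: "Wt \<in> borel_measurable \<mu>" "integrable \<mu> (\<lambda>\<omega>. (Wt \<omega>)\<^sup>2)"
              "prob_space.variance \<mu> Wt > 0"
    (* (A4): P(Y = T | W,Z) > 0 and P(Y = C | W,Z) > 0 a.s. *)
    and A4: "AE \<omega> in \<mu>. (\<forall>k\<in>{0,1::nat}.
               (\<integral>y. subdens g \<gamma>s \<theta>s (Xt \<omega>) (Wt \<omega>) (Z \<omega>) y k \<partial>lborel) > 0)"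
    (* (A5): gamma* is identified from the distribution of the observed data *)
    and A5: "\<forall>\<gamma>'\<in>\<Gamma>. \<forall>\<theta>'. valid_theta m \<theta>' \<longrightarrow>
               (AE \<omega> in \<mu>. \<forall>k\<in>{0,1::nat}. \<forall>y.
                  subdens g \<gamma>' \<theta>' (Xt \<omega>) (Wt \<omega>) (Z \<omega>) y k
                  = subdens g \<gamma>s \<theta>s (Xt \<omega>) (Wt \<omega>) (Z \<omega>) y k) \<longrightarrow> \<gamma>' = \<gamma>s"
    (* hypothesis: equal conditional sub-densities for a.e. (w,z) *)
    and eq: "AE \<omega> in \<mu>. \<forall>k\<in>{0,1::nat}. \<forall>y.
               subdens g \<gamma> \<theta> (Xt \<omega>) (Wt \<omega>) (Z \<omega>) y k
               = subdens g \<gamma>s \<theta>s (Xt \<omega>) (Wt \<omega>) (Z \<omega>) y k"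
  shows "\<gamma> = \<gamma>s \<and> \<theta> = \<theta>s"
proof -
  interpret P: prob_space \<mu> by (rule prob)
  have gg: "\<gamma> = \<gamma>s" using A5 params eq by blast
  have vt: "sigmaT \<theta> > 0" "sigmaC \<theta> > 0" "\<bar>rho \<theta>\<bar> < 1" "length (betaT \<theta>) = m + 1" "length (betaC \<theta>) = m + 1"
    using params(3) unfolding valid_theta_def by auto
  have vs: "sigmaT \<theta>s > 0" "sigmaC \<theta>s > 0" "\<bar>rho \<theta>s\<bar> < 1" "length (betaT \<theta>s) = m + 1" "length (betaC \<theta>s) = m + 1"
    using params(4) unfolding valid_theta_def by auto
  define aT where "aT (th::theta) \<omega> = lin (Xt \<omega>) (betaT th) + Z \<omega> * alphaT th + V \<omega> * lambdaT th" for th \<omega>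
  define aC where "aC (th::theta) \<omega> = lin (Xt \<omega>) (betaC th) + Z \<omega> * alphaC th + V \<omega> * lambdaC th" for th \<omega>
  have ident: "AE \<omega> in \<mu>. sigmaT \<theta> = sigmaT \<theta>s \<and> sigmaC \<theta> = sigmaC \<theta>s \<and> rho \<theta> = rho \<theta>s \<and> aT \<theta> \<omega> = aT \<theta>s \<omega> \<and> aC \<theta> \<omega> = aC \<theta>s \<omega>"
    using eq
  proof (rule AE_mp, intro AE_I2 impI)
    fix \<omega> assume h: "\<forall>k\<in>{0,1::nat}. \<forall>y. subdens g \<gamma> \<theta> (Xt \<omega>) (Wt \<omega>) (Z \<omega>) y k
               = subdens g \<gamma>s \<theta>s (Xt \<omega>) (Wt \<omega>) (Z \<omega>) y k"
    have F1: "\<forall>y. HH (sigmaT \<theta>) (aT \<theta> \<omega>) (g1 (sigmaT \<theta>) (sigmaC \<theta>) (rho \<theta>)) (d1 (sigmaT \<theta>) (sigmaC \<theta>) (rho \<theta>) (aT \<theta> \<omega>) (aC \<theta> \<omega>)) y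
       = HH (sigmaT \<theta>s) (aT \<theta>s \<omega>) (g1 (sigmaT \<theta>s) (sigmaC \<theta>s) (rho \<theta>s)) (d1 (sigmaT \<theta>s) (sigmaC \<theta>s) (rho \<theta>s) (aT \<theta>s \<omega>) (aC \<theta>s \<omega>)) y"
    proof -
      have S1: "\<forall>y. subdens g \<gamma>s \<theta> (Xt \<omega>) (Wt \<omega>) (Z \<omega>) y 1 = subdens g \<gamma>s \<theta>s (Xt \<omega>) (Wt \<omega>) (Z \<omega>) y 1"
        using h gg by auto
      show ?thesis
        apply (intro allI)
        subgoal for y using S1[rule_format, of y]
          by (simp only: subdens1[OF vt(1-3)] subdens1[OF vs(1-3)] aT_def aC_def V_def)
        done
    qed
    have F0: "\<forall>y. HH (sigmaC \<theta>) (aC \<theta> \<omega>) (g1 (sigmaC \<theta>) (sigmaT \<theta>) (rho \<theta>)) (d1 (sigmaC \<theta>) (sigmaT \<theta>) (rho \<theta>) (aC \<theta> \<omega>) (aT \<theta> \<omega>)) y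
       = HH (sigmaC \<theta>s) (aC \<theta>s \<omega>) (g1 (sigmaC \<theta>s) (sigmaT \<theta>s) (rho \<theta>s)) (d1 (sigmaC \<theta>s) (sigmaT \<theta>s) (rho \<theta>s) (aC \<theta>s \<omega>) (aT \<theta>s \<omega>)) y"
    proof -
      have S0: "\<forall>y. subdens g \<gamma>s \<theta> (Xt \<omega>) (Wt \<omega>) (Z \<omega>) y 0 = subdens g \<gamma>s \<theta>s (Xt \<omega>) (Wt \<omega>) (Z \<omega>) y 0"
        using h gg by auto
      show ?thesis
        apply (intro allI)
        subgoal for y using S0[rule_format, of y]
          by (simp only: subdens0[OF vt(1-3)] subdens0[OF vs(1-3)] aT_def aC_def V_def)
        done
    qed
    show "sigmaT \<theta> = sigmaT \<theta>s \<and> sigmaC \<theta> = sigmaC \<theta>s \<and> rho \<theta> = rho \<theta>s \<and> aT \<theta> \<omega> = aT \<theta>s \<omega> \<and> aC \<theta> \<omega> = aC \<theta>s \<omega>"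
      by (rule omega_ident[OF vt(1-3) vs(1-3) F1 F0])
  qed
  have "AE \<omega> in \<mu>. sigmaT \<theta> = sigmaT \<theta>s \<and> sigmaC \<theta> = sigmaC \<theta>s \<and> rho \<theta> = rho \<theta>s"
    using ident by eventually_elim auto
  then have cst: "sigmaT \<theta> = sigmaT \<theta>s" "sigmaC \<theta> = sigmaC \<theta>s" "rho \<theta> = rho \<theta>s" by simp_all
  have aTe: "AE \<omega> in \<mu>. lin (Xt \<omega>) (betaT \<theta>) + Z \<omega> * alphaT \<theta> + V \<omega> * lambdaT \<theta> = lin (Xt \<omega>) (betaT \<theta>s) + Z \<omega> * alphaT \<theta>s + V \<omega> * lambdaT \<theta>s"
    using ident unfolding aT_def by eventually_elim auto
  have aCe: "AE \<omega> in \<mu>. lin (Xt \<omega>) (betaC \<theta>) + Z \<omega> * alphaC \<theta> + V \<omega> * lambdaC \<theta> = lin (Xt \<omega>) (betaC \<theta>s) + Z \<omega> * alphaC \<theta>s + V \<omega> * lambdaC \<theta>s"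
    using ident unfolding aC_def by eventually_elim auto
  have Ud: "U = (\<lambda>\<omega> i. if i < m then Xt \<omega> ! i else if i = m then Z \<omega> else V \<omega>)"
    using U_def by simp
  have rT: "betaT \<theta> = betaT \<theta>s \<and> alphaT \<theta> = alphaT \<theta>s \<and> lambdaT \<theta> = lambdaT \<theta>s"
    by (rule regress[OF Ud prob dimX A3_meas A3_int A3_rank vt(4) vs(4) aTe])
  have rC: "betaC \<theta> = betaC \<theta>s \<and> alphaC \<theta> = alphaC \<theta>s \<and> lambdaC \<theta> = lambdaC \<theta>s"
    by (rule regress[OF Ud prob dimX A3_meas A3_int A3_rank vt(5) vs(5) aCe])
  have "\<theta> = \<theta>s" using rT rC cst by (intro theta.equality) auto
  with gg show ?thesis by simp
qed

end
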